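(* There is an absolute constant $K$ such that for every finite program $\Omega$ with weight constraints in which all weights $w_i$ are integers, the number of weight atoms (atoms of the forms $q_{w\le S}$, $q_{w<S}$) occurring in $[\Omega]^{nn}$ is at most $K\sum_C (L(C)+1)(W(C)+1)$, the sum ranging over all weight constraints $C$ occurring in $\Omega$; in the paper's notation, this number is $O\big(\sum_C L(C)\cdot W(C)\big)$.
   Context: A rule element is a literal $l$ or $\mathit{not}\ l$ (literals are atoms or classically negated atoms $\neg a$). A weight constraint $C$ is $L\le\{c_1=w_1,\dots,c_m=w_m\}\le U$ with $L,U$ reals or $\pm\infty$, rule elements $c_i$ ($m\ge0$), nonnegative real weights $w_i$; its length is $L(C)=m$ and its weight is $W(C)=w_1+\dots+w_m$. A rule with weight constraints is $C_0\leftarrow C_1,\dots,C_n$; the rule elements of $C_0$ are its positive/negative head elements; a program with weight constraints is a set of such rules. Nonnested translation. For each literal $l$ there is a new atom $q_{\mathit{not}\,l}$, and for each value $w$ and each expression $S=\{c_1=w_1,\dots,c_m=w_m\}$ new atoms $q_{w\le S}$ and $q_{w<S}$ (weight atoms). For $m>0$, $S'=\{c_1=w_1,\dots,c_{m-1}=w_{m-1}\}$. A program $\Pi$ (set of rules $\mathit{Head}\leftarrow\mathit{Body}$, heads literals or $\bot$, bodies conjunctions of literals possibly prefixed by $\mathit{not}$) is closed if: for each atom $q_{w\le S}$ occurring in $\Pi$, $\Pi$ contains the fact $q_{w\le S}$ if $w\le0$, and the rules $q_{w\le S}\leftarrow q_{w\le S'}$ and $q_{w\le S}\leftarrow c_m,q_{w-w_m\le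 S'}$ if $0<w\le w_1+\dots+w_m$; for each atom $q_{w<S}$ occurring in $\Pi$, $\Pi$ contains the fact $q_{w<S}$ if $w<0$, and the rules $q_{w<S}\leftarrow q_{w<S'}$ and $q_{w<S}\leftarrow c_m,q_{w-w_m<S'}$ if $0\le w<w_1+\dots+w_m$. $[L\le S\le U]^{nn}$ is the conjunction $q_{L\le S},\mathit{not}\,q_{U<S}$. $[\Omega]^{nn}$ is the smallest closed program containing, for every rule $L_0\le S_0\le U_0\leftarrow C_1,\dots,C_n$ of $\Omega$ and each of its positive head elements $l$, the rules $q_{\mathit{not}\,l}\leftarrow\mathit{not}\,l$ and $l\leftarrow\mathit{not}\,q_{\mathit{not}\,l},[C_1]^{nn},\dots,[C_n]^{nn}$, and the rules $\bot\leftarrow\mathit{not}\,q_{L_0\le S_0},[C_1]^{nn},\dots,[C_n]^{nn}$ and $\bot\leftarrow q_{U_0<S_0},[C_1]^{nn},\dots,[C_n]^{nn}$. *)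

theory Defs
  imports Complex_Main "HOL-Library.Extended_Real"
begin

text \<open>Literals: atoms or classically negated atoms.\<close>
datatype 'a lit = Pos 'a | Neg 'a

text \<open>Rule elements: a literal l or not l.\<close>
datatype 'a elem = Lit "'a lit" | NotL "'a lit"

text \<open>An expression S = {c_1=w_1,...,c_m=w_m}, as an ordered list (the order
  matters for S').\<close>
type_synonym 'a wexpr = "('a elem \<times> real) list"

datatype 'a wc = WC ereal "'a wexpr" ereal

fun wc_expr :: "'a wc \<Rightarrow> 'a wexpr" where
  "wc_expr (WC L S U) = S"

definition expr_weight :: "'a wexpr \<Rightarrow> real" where
  "expr_weight S = sum_list (map snd S)"

definition wc_length :: "'a wc \<Rightarrow> nat" where
  "wc_length C = length (wc_expr C)"

definition wc_weight :: "'a wc \<Rightarrow> real" where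
  "wc_weight C = expr_weight (wc_expr C)"

type_synonym 'a wrule = "'a wc \<times> 'a wc list"

definition constraints_of :: "'a wrule set \<Rightarrow> 'a wc set" where
  "constraints_of \<Omega> = (\<Union>(C0, B) \<in> \<Omega>. insert C0 (set B))"

definition integer_weights :: "'a wrule set \<Rightarrow> bool" where
  "integer_weights \<Omega> \<longleftrightarrow>
     (\<forall>C \<in> constraints_of \<Omega>. \<forall>(c, w) \<in> set (wc_expr C). 0 \<le> w \<and> w \<in> \<int>)"

text \<open>Atoms of the translation: original atoms, q_{not l}, and weight atoms
  q_{w<=S}, q_{w<S}.\<close>
datatype 'a natom = Orig 'a | QNot "'a lit" | QLe ereal "'a wexpr" | QLt ereal "'a wexpr"

text \<open>Nonnested rule: head is a literal or bottom (None), body a list of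
  literals possibly prefixed by not.\<close>
type_synonym 'a nrule = "'a natom lit option \<times> 'a natom elem list"

fun lit_atom :: "'b lit \<Rightarrow> 'b" where
  "lit_atom (Pos a) = a" | "lit_atom (Neg a) = a"

fun elem_atom :: "'b elem \<Rightarrow> 'b" where
  "elem_atom (Lit l) = lit_atom l" | "elem_atom (NotL l) = lit_atom l"

definition natoms :: "'a nrule \<Rightarrow> 'a natom set" where
  "natoms r = (case fst r of None \<Rightarrow> {} | Some l \<Rightarrow> {lit_atom l})
              \<union> elem_atom ` set (snd r)"

definition lift_lit :: "'a lit \<Rightarrow> 'a natom lit" where
  "lift_lit l = map_lit Orig l"

definition lift_elem :: "'a elem \<Rightarrow> 'a natom elem" where
  "lift_elem c = map_elem Orig c"

fun tr_wc :: "'a wc \<Rightarrow> 'a natom elem list" where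
  "tr_wc (WC L S U) = [Lit (Pos (QLe L S)), NotL (Pos (QLt U S))]"

definition tr_body :: "'a wc list \<Rightarrow> 'a natom elem list" where
  "tr_body B = concat (map tr_wc B)"

fun is_weight_atom :: "'a natom \<Rightarrow> bool" where
  "is_weight_atom (QLe w S) = True"
| "is_weight_atom (QLt w S) = True"
| "is_weight_atom _ = False"

inductive_set nn :: "'a wrule set \<Rightarrow> 'a nrule set" for \<Omega> :: "'a wrule set" where
  head_qnot: "(WC L0 S0 U0, B) \<in> \<Omega> \<Longrightarrow> (Lit l, w) \<in> set S0 \<Longrightarrow>
     (Some (Pos (QNot l)), [NotL (lift_lit l)]) \<in> nn \<Omega>"
| head_lit: "(WC L0 S0 U0, B) \<in> \<Omega> \<Longrightarrow> (Lit l, w) \<in> set S0 \<Longrightarrow>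
     (Some (lift_lit l), NotL (Pos (QNot l)) # tr_body B) \<in> nn \<Omega>"
| lower: "(WC L0 S0 U0, B) \<in> \<Omega> \<Longrightarrow>
     (None, NotL (Pos (QLe L0 S0)) # tr_body B) \<in> nn \<Omega>"
| upper: "(WC L0 S0 U0, B) \<in> \<Omega> \<Longrightarrow>
     (None, Lit (Pos (QLt U0 S0)) # tr_body B) \<in> nn \<Omega>"
| le_fact: "r \<in> nn \<Omega> \<Longrightarrow> QLe w S \<in> natoms r \<Longrightarrow> w \<le> 0 \<Longrightarrow>
     (Some (Pos (QLe w S)), []) \<in> nn \<Omega>"
| le_rule1: "r \<in> nn \<Omega> \<Longrightarrow> QLe w S \<in> natoms r \<Longrightarrow> 0 < w \<Longrightarrow> w \<le> ereal (expr_weight S) \<Longrightarrow>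
     (Some (Pos (QLe w S)), [Lit (Pos (QLe w (butlast S)))]) \<in> nn \<Omega>"
| le_rule2: "r \<in> nn \<Omega> \<Longrightarrow> QLe w S \<in> natoms r \<Longrightarrow> 0 < w \<Longrightarrow> w \<le> ereal (expr_weight S) \<Longrightarrow>
     (Some (Pos (QLe w S)),
        [lift_elem (fst (last S)), Lit (Pos (QLe (w - ereal (snd (last S))) (butlast S)))]) \<in> nn \<Omega>"
| lt_fact: "r \<in> nn \<Omega> \<Longrightarrow> QLt w S \<in> natoms r \<Longrightarrow> w < 0 \<Longrightarrow>
     (Some (Pos (QLt w S)), []) \<in> nn \<Omega>"
| lt_rule1: "r \<in> nn \<Omega> \<Longrightarrow> QLt w S \<in> natoms r \<Longrightarrow> 0 \<le> w \<Longrightarrow> w < ereal (expr_weight S) \<Longrightarrow>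
     (Some (Pos (QLt w S)), [Lit (Pos (QLt w (butlast S)))]) \<in> nn \<Omega>"
| lt_rule2: "r \<in> nn \<Omega> \<Longrightarrow> QLt w S \<in> natoms r \<Longrightarrow> 0 \<le> w \<Longrightarrow> w < ereal (expr_weight S) \<Longrightarrow>
     (Some (Pos (QLt w S)),
        [lift_elem (fst (last S)), Lit (Pos (QLt (w - ereal (snd (last S))) (butlast S)))]) \<in> nn \<Omega>"

definition weight_atoms_nn :: "'a wrule set \<Rightarrow> 'a natom set" where
  "weight_atoms_nn \<Omega> = {a. \<exists>r \<in> nn \<Omega>. a \<in> natoms r \<and> is_weight_atom a}"

end

theory Submission
  imports Defs
begin

definition invS :: "ereal \<Rightarrow> 'a wexpr \<Rightarrow> (ereal \<times> 'a wexpr) set" where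
  "invS X S = {(X - ereal (real j), take k S) | j k. k \<le> length S \<and>
       real j + expr_weight (take k S) \<le> expr_weight S}"

fun invC :: "'a wc \<Rightarrow> 'a natom set" where
  "invC (WC L S U) = (\<lambda>(w,T). QLe w T) ` invS L S \<union> (\<lambda>(w,T). QLt w T) ` invS U S"

definition good :: "'a wexpr \<Rightarrow> bool" where
  "good S \<longleftrightarrow> (\<forall>p\<in>set S. 0 \<le> snd p \<and> snd p \<in> \<int>)"

lemma ew_nonneg: "good S \<Longrightarrow> 0 \<le> expr_weight (take k S)"
  unfolding expr_weight_def good_def
  by (rule sum_list_nonneg) (auto dest: in_set_takeD)

lemma ereal_sub2: "(X - ereal a) - ereal b = X - ereal (a + b)"
  by (cases X) auto

lemma inv_close:
  assumes g: "good S" and m: "(w, T) \<in> invS X S" and pos: "0 < expr_weight T"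
  shows "(w, butlast T) \<in> invS X S \<and> (w - ereal (snd (last T)), butlast T) \<in> invS X S"
proof -
  from m obtain j k where w: "w = X - ereal (real j)" and T: "T = take k S"
    and k: "k \<le> length S" and jw: "real j + expr_weight (take k S) \<le> expr_weight S"
    unfolding invS_def by blast
  have "k \<noteq> 0" proof assume "k = 0" then show False using pos T by (simp add: expr_weight_def) qed
  then obtain k' where kk: "k = Suc k'" by (cases k) auto
  have kl: "k' < length S" using k kk by simp
  have tk: "take k S = take k' S @ [S ! k']" using kl kk by (simp add: take_Suc_conv_app_nth)
  have sS: "S ! k' \<in> set S" using kl by simp
  then have "0 \<le> snd (S ! k')" "snd (S ! k') \<in> \<int>" using g by (auto simp: good_def)
  then obtain n :: nat where n: "snd (S ! k') = real n"
  proof -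
    obtain i :: int where i: "snd (S ! k') = of_int i" using \<open>snd (S ! k') \<in> \<int>\<close> by (auto elim: Ints_cases)
    then have "0 \<le> i" using \<open>0 \<le> snd (S ! k')\<close> by simp
    then have "snd (S ! k') = real (nat i)" using i by simp
    then show ?thesis using that by blast
  qed
  have W: "expr_weight (take k S) = expr_weight (take k' S) + real n"
    using tk n by (simp add: expr_weight_def)
  have bl: "butlast T = take k' S" "last T = S ! k'" using T tk by auto
  have e0: "0 \<le> real n" by simp
  have 1: "(w, butlast T) \<in> invS X S"
    unfolding invS_def
    by (rule CollectI, rule exI[of _ j], rule exI[of _ k']) (use w bl kl jw W e0 in auto)
  have ee: "w - ereal (snd (last T)) = X - ereal (real (j + n))"
    using w bl n by (simp add: ereal_sub2)
  have 2: "(w - ereal (snd (last T)), butlast T) \<in> invS X S"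
    unfolding invS_def
    by (rule CollectI, rule exI[of _ "j+n"], rule exI[of _ k']) (use ee bl kl jw W in auto)
  show ?thesis using 1 2 by blast
qed

lemma invS_sub:
  assumes g: "good S"
  shows "invS X S \<subseteq> (\<lambda>(j,k). (X - ereal (real j), take k S)) ` ({..nat \<lfloor>expr_weight S\<rfloor>} \<times> {..length S})"
proof
  fix x assume "x \<in> invS X S"
  then obtain j k where x: "x = (X - ereal (real j), take k S)" and k: "k \<le> length S"
    and jw: "real j + expr_weight (take k S) \<le> expr_weight S"
    unfolding invS_def by blast
  have "real j \<le> expr_weight S" using jw ew_nonneg[OF g, of k] by linarith
  then have "j \<le> nat \<lfloor>expr_weight S\<rfloor>" by linarith
  then show "x \<in> (\<lambda>(j,k). (X - ereal (real j), take k S)) ` ({..nat \<lfloor>expr_weight S\<rfloor>} \<times> {..length S})"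
    using x k by force
qed

lemma invS_card:
  assumes g: "good S"
  shows "finite (invS X S) \<and> real (card (invS X S)) \<le> (real (length S) + 1) * (expr_weight S + 1)"
proof -
  let ?A = "({..nat \<lfloor>expr_weight S\<rfloor>} \<times> {..length S})"
  have f: "finite ?A" by simp
  have "card (invS X S) \<le> card ?A"
    by (rule order_trans[OF card_mono[OF finite_imageI[OF f] invS_sub[OF g]] card_image_le[OF f]])
  also have "card ?A = (nat \<lfloor>expr_weight S\<rfloor> + 1) * (length S + 1)" by simp
  finally have c0: "card (invS X S) \<le> (nat \<lfloor>expr_weight S\<rfloor> + 1) * (length S + 1)" .
  have c: "real (card (invS X S)) \<le> (real (nat \<lfloor>expr_weight S\<rfloor>) + 1) * (real (length S) + 1)"
  proof -
    have "real (card (invS X S)) \<le> real ((nat \<lfloor>expr_weight S\<rfloor> + 1) * (length S + 1))"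
      using c0 by (simp only: of_nat_le_iff)
    also have "\<dots> = (real (nat \<lfloor>expr_weight S\<rfloor>) + 1) * (real (length S) + 1)" by (simp add: algebra_simps)
    finally show ?thesis .
  qed
  have e: "0 \<le> expr_weight S" using ew_nonneg[OF g, of "length S"] by simp
  have "real (nat \<lfloor>expr_weight S\<rfloor>) \<le> expr_weight S" using e by linarith
  then have "(real (nat \<lfloor>expr_weight S\<rfloor>) + 1) * (real (length S) + 1) \<le> (real (length S) + 1) * (expr_weight S + 1)"
    by (simp add: mult.commute)
  moreover have "finite (invS X S)" using finite_subset[OF invS_sub[OF g] finite_imageI[OF f]] .
  ultimately show ?thesis using c by linarith
qed

lemma invC_card:
  assumes g: "good (wc_expr C)"
  shows "finite (invC C) \<and> real (card (invC C)) \<le> 2 * ((real (wc_length C) + 1) * (wc_weight C + 1))"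
proof (cases C)
  case (WC L S U)
  have gS: "good S" using g WC by simp
  let ?f = "\<lambda>(w,T). QLe w T" and ?g = "\<lambda>(w,T). QLt w T"
  from invS_card[OF gS, of L] invS_card[OF gS, of U]
  have a: "finite (invS L S)" "finite (invS U S)"
    "real (card (invS L S)) \<le> (real (length S) + 1) * (expr_weight S + 1)"
    "real (card (invS U S)) \<le> (real (length S) + 1) * (expr_weight S + 1)" by auto
  have "card (invC C) \<le> card (?f ` invS L S) + card (?g ` invS U S)"
    using WC by (simp add: card_Un_le)
  also have "\<dots> \<le> card (invS L S) + card (invS U S)"
    by (intro add_mono card_image_le a)
  finally have "real (card (invC C)) \<le> real (card (invS L S)) + real (card (invS U S))"
    by linarith
  then show ?thesis using a WC by (simp add: wc_length_def wc_weight_def)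
qed

definition Inv :: "'a wrule set \<Rightarrow> 'a natom set" where
  "Inv \<Omega> = (\<Union>C \<in> constraints_of \<Omega>. invC C)"

lemma self_inv: "(X, S) \<in> invS X S"
  unfolding invS_def by (rule CollectI, rule exI[of _ 0], rule exI[of _ "length S"]) auto

lemma body_inv:
  assumes "set B \<subseteq> constraints_of \<Omega>" "a \<in> elem_atom ` set (tr_body B)" "is_weight_atom a"
  shows "a \<in> Inv \<Omega>"
proof -
  from assms(2) obtain C where C: "C \<in> set B" and a: "a \<in> elem_atom ` set (tr_wc C)"
    unfolding tr_body_def by auto
  obtain L S U where CC: "C = WC L S U" by (cases C)
  have "a = QLe L S \<or> a = QLt U S" using a CC by auto
  then have "a \<in> invC C" using CC self_inv by force
  then show ?thesis using C assms(1) unfolding Inv_def by blast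
qed

lemma lift_lit_atom: "lit_atom (lift_lit l) = Orig (lit_atom l)"
  by (cases l) (auto simp: lift_lit_def)

lemma lift_elem_atom: "elem_atom (lift_elem l) = Orig (elem_atom l)"
  by (cases l) (auto simp: lift_elem_def lift_lit_atom[unfolded lift_lit_def])

lemma good_of:
  assumes "integer_weights \<Omega>" "C \<in> constraints_of \<Omega>" shows "good (wc_expr C)"
  using assms unfolding integer_weights_def good_def by fastforce

lemma le_pos: "0 < w \<Longrightarrow> w \<le> ereal x \<Longrightarrow> 0 < x"
  by (metis ereal_less(2) less_le_trans zero_ereal_def)

lemma lt_pos: "0 \<le> w \<Longrightarrow> w < ereal x \<Longrightarrow> 0 < x"
  by (metis ereal_less(2) le_less_trans zero_ereal_def)

lemma closeLe:
  assumes iw: "integer_weights \<Omega>" and m: "QLe w T \<in> Inv \<Omega>" and pos: "0 < expr_weight T"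
  shows "QLe w (butlast T) \<in> Inv \<Omega> \<and> QLe (w - ereal (snd (last T))) (butlast T) \<in> Inv \<Omega>"
proof -
  from m obtain C where C: "C \<in> constraints_of \<Omega>" and a: "QLe w T \<in> invC C" unfolding Inv_def by blast
  obtain L S U where CC: "C = WC L S U" by (cases C)
  have g: "good S" using good_of[OF iw C] CC by simp
  have "(w, T) \<in> invS L S" using a CC by auto
  from inv_close[OF g this pos] have "QLe w (butlast T) \<in> invC C \<and> QLe (w - ereal (snd (last T))) (butlast T) \<in> invC C"
    using CC by force
  then show ?thesis using C unfolding Inv_def by blast
qed

lemma closeLt:
  assumes iw: "integer_weights \<Omega>" and m: "QLt w T \<in> Inv \<Omega>" and pos: "0 < expr_weight T"
  shows "QLt w (butlast T) \<in> Inv \<Omega> \<and> QLt (w - ereal (snd (last T))) (butlast T) \<in> Inv \<Omega>"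
proof -
  from m obtain C where C: "C \<in> constraints_of \<Omega>" and a: "QLt w T \<in> invC C" unfolding Inv_def by blast
  obtain L S U where CC: "C = WC L S U" by (cases C)
  have g: "good S" using good_of[OF iw C] CC by simp
  have "(w, T) \<in> invS U S" using a CC by auto
  from inv_close[OF g this pos] have "QLt w (butlast T) \<in> invC C \<and> QLt (w - ereal (snd (last T))) (butlast T) \<in> invC C"
    using CC by force
  then show ?thesis using C unfolding Inv_def by blast
qed

lemma nn_inv:
  assumes iw: "integer_weights \<Omega>"
  shows "r \<in> nn \<Omega> \<Longrightarrow> a \<in> natoms r \<Longrightarrow> is_weight_atom a \<Longrightarrow> a \<in> Inv \<Omega>"
proof (induction r arbitrary: a rule: nn.induct)
  case (head_qnot L0 S0 U0 B l w)
  then show ?case by (auto simp: natoms_def lift_lit_atom)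
next
  case (head_lit L0 S0 U0 B l w)
  have "set B \<subseteq> constraints_of \<Omega>" using head_lit(1) unfolding constraints_of_def by blast
  moreover have "a \<in> elem_atom ` set (tr_body B)" using head_lit(3,4) by (auto simp: natoms_def lift_lit_atom)
  ultimately show ?case using head_lit(4) by (rule body_inv)
next
  case (lower L0 S0 U0 B)
  have sb: "set B \<subseteq> constraints_of \<Omega>" and h: "WC L0 S0 U0 \<in> constraints_of \<Omega>"
    using lower(1) unfolding constraints_of_def by blast+
  have "QLe L0 S0 \<in> Inv \<Omega>" using h self_inv unfolding Inv_def by fastforce
  moreover have "a = QLe L0 S0 \<or> a \<in> elem_atom ` set (tr_body B)" using lower(2) by (auto simp: natoms_def)
  ultimately show ?case using body_inv[OF sb _ lower(3)] by blast
next
  case (upper L0 S0 U0 B)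
  have sb: "set B \<subseteq> constraints_of \<Omega>" and h: "WC L0 S0 U0 \<in> constraints_of \<Omega>"
    using upper(1) unfolding constraints_of_def by blast+
  have "QLt U0 S0 \<in> Inv \<Omega>" using h self_inv unfolding Inv_def by fastforce
  moreover have "a = QLt U0 S0 \<or> a \<in> elem_atom ` set (tr_body B)" using upper(2) by (auto simp: natoms_def)
  ultimately show ?case using body_inv[OF sb _ upper(3)] by blast
next
  case (le_fact r w S)
  then show ?case by (auto simp: natoms_def)
next
  case (le_rule1 r w S)
  have "QLe w S \<in> Inv \<Omega>" using le_rule1 by simp
  with closeLe[OF iw this le_pos[OF le_rule1(3,4)]] show ?case using le_rule1 by (auto simp: natoms_def)
next
  case (le_rule2 r w S)
  have "QLe w S \<in> Inv \<Omega>" using le_rule2 by simp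
  with closeLe[OF iw this le_pos[OF le_rule2(3,4)]] show ?case using le_rule2 by (auto simp: natoms_def lift_elem_atom)
next
  case (lt_fact r w S)
  then show ?case by (auto simp: natoms_def)
next
  case (lt_rule1 r w S)
  have "QLt w S \<in> Inv \<Omega>" using lt_rule1 by simp
  with closeLt[OF iw this lt_pos[OF lt_rule1(3,4)]] show ?case using lt_rule1 by (auto simp: natoms_def)
next
  case (lt_rule2 r w S)
  have "QLt w S \<in> Inv \<Omega>" using lt_rule2 by simp
  with closeLt[OF iw this lt_pos[OF lt_rule2(3,4)]] show ?case using lt_rule2 by (auto simp: natoms_def lift_elem_atom)
qed

theorem proposition3:
  "\<exists>K::real. \<forall>\<Omega> :: 'a wrule set. finite \<Omega> \<longrightarrow> integer_weights \<Omega> \<longrightarrow>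
     finite (weight_atoms_nn \<Omega>) \<and>
     real (card (weight_atoms_nn \<Omega>))
       \<le> K * (\<Sum>C \<in> constraints_of \<Omega>. (real (wc_length C) + 1) * (wc_weight C + 1))"
proof (intro exI[of _ 2] allI impI)
  fix \<Omega> :: "'a wrule set"
  assume fin: "finite \<Omega>" and iw: "integer_weights \<Omega>"
  have fc: "finite (constraints_of \<Omega>)" using fin unfolding constraints_of_def by auto
  have sub: "weight_atoms_nn \<Omega> \<subseteq> Inv \<Omega>"
    unfolding weight_atoms_nn_def using nn_inv[OF iw] by blast
  have ci: "\<And>C. C \<in> constraints_of \<Omega> \<Longrightarrow> finite (invC C) \<and> real (card (invC C)) \<le> 2 * ((real (wc_length C) + 1) * (wc_weight C + 1))"
    using invC_card good_of[OF iw] by blast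
  have fI: "finite (Inv \<Omega>)" unfolding Inv_def using fc ci by blast
  have "card (weight_atoms_nn \<Omega>) \<le> card (Inv \<Omega>)" by (rule card_mono[OF fI sub])
  also have "card (Inv \<Omega>) \<le> (\<Sum>C \<in> constraints_of \<Omega>. card (invC C))"
    unfolding Inv_def by (rule card_UN_le[OF fc])
  finally have "real (card (weight_atoms_nn \<Omega>)) \<le> (\<Sum>C \<in> constraints_of \<Omega>. real (card (invC C)))"
    by (metis of_nat_le_iff of_nat_sum)
  also have "\<dots> \<le> (\<Sum>C \<in> constraints_of \<Omega>. 2 * ((real (wc_length C) + 1) * (wc_weight C + 1)))"
    by (rule sum_mono) (use ci in blast)
  finally show "finite (weight_atoms_nn \<Omega>) \<and> real (card (weight_atoms_nn \<Omega>))
       \<le> 2 * (\<Sum>C \<in> constraints_of \<Omega>. (real (wc_length C) + 1) * (wc_weight C + 1))"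
    using finite_subset[OF sub fI] by (simp add: sum_distrib_left)
qed

end
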